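(* Let $V$ be a left vector space over a field $K$ (not necessarily commutative, of arbitrary finite or infinite dimension) such that $\mathcal G\neq\emptyset$. For all $P,Q\in\mathcal G$ the following are equivalent: (a) $P$ and $Q$ are adjacent. (b) There exists $R\in\mathcal G$ with $R\neq P$, $R\neq Q$, such that for every $X\in\mathcal G$: if $X\oplus R=V$ then $X\oplus P=V$ or $X\oplus Q=V$.
   Context: Throughout, $K$ is a (not necessarily commutative) field, i.e. a division ring, and $V$ is a left vector space over $K$ of arbitrary (possibly infinite) dimension. $\mathcal G$ denotes the set of all subspaces $X\le V$ such that $X$ is isomorphic to the quotient space $V/X$ (equivalently, $X$ is isomorphic to one, hence all, of its complements in $V$). Two elements $X,Y\in\mathcal G$ are called distant if they are complementary, i.e. $X\oplus Y=V$ ($X\cap Y=0$ and $X+Y=V$). Two elements $X,Y\in\mathcal G$ are called adjacent (written $X\sim Y$) if $\dim((X+Y)/X)=\dim((X+Y)/Y)=1$. *)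

theory Defs
  imports Main
begin

text \<open>A left vector space over a (not necessarily commutative) field, i.e. a division ring K
  (type class division_ring), is modelled as an abelian group type 'v together with a left
  scalar multiplication sc satisfying the module axioms. The whole type 'v is the space V.\<close>

definition left_vs :: "('k::division_ring \<Rightarrow> 'v::ab_group_add \<Rightarrow> 'v) \<Rightarrow> bool" where
  "left_vs sc \<longleftrightarrow>
     (\<forall>a u v. sc a (u + v) = sc a u + sc a v) \<and>
     (\<forall>a b v. sc (a + b) v = sc a v + sc b v) \<and>
     (\<forall>a b v. sc (a * b) v = sc a (sc b v)) \<and>
     (\<forall>v. sc 1 v = v)"

definition subspace :: "('k::division_ring \<Rightarrow> 'v::ab_group_add \<Rightarrow> 'v) \<Rightarrow> 'v set \<Rightarrow> bool" where
  "subspace sc X \<longleftrightarrow> 0 \<in> X \<and> (\<forall>x\<in>X. \<forall>y\<in>X. x + y \<in> X) \<and> (\<forall>a. \<forall>x\<in>X. sc a x \<in> X)"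

definition ssum :: "'v::ab_group_add set \<Rightarrow> 'v set \<Rightarrow> 'v set" where
  "ssum X Y = {x + y | x y. x \<in> X \<and> y \<in> Y}"

text \<open>The quotient space V/X: its elements are the cosets v + X, with the induced operations.\<close>
definition coset :: "'v::ab_group_add set \<Rightarrow> 'v \<Rightarrow> 'v set" where
  "coset X v = {v + x | x. x \<in> X}"

definition quot :: "'v::ab_group_add set \<Rightarrow> 'v set set" where
  "quot X = range (coset X)"

definition qadd :: "'v::ab_group_add set \<Rightarrow> 'v set \<Rightarrow> 'v set \<Rightarrow> 'v set" where
  "qadd X A B = {a + b | a b. a \<in> A \<and> b \<in> B}"

definition qscale :: "('k::division_ring \<Rightarrow> 'v::ab_group_add \<Rightarrow> 'v) \<Rightarrow> 'v set \<Rightarrow> 'k \<Rightarrow> 'v set \<Rightarrow> 'v set" where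
  "qscale sc X c A = {sc c a + x | a x. a \<in> A \<and> x \<in> X}"

definition lin_iso :: "'a set \<Rightarrow> ('a \<Rightarrow> 'a \<Rightarrow> 'a) \<Rightarrow> ('k \<Rightarrow> 'a \<Rightarrow> 'a)
                      \<Rightarrow> 'b set \<Rightarrow> ('b \<Rightarrow> 'b \<Rightarrow> 'b) \<Rightarrow> ('k \<Rightarrow> 'b \<Rightarrow> 'b) \<Rightarrow> ('a \<Rightarrow> 'b) \<Rightarrow> bool" where
  "lin_iso A addA scA B addB scB f \<longleftrightarrow>
     bij_betw f A B \<and>
     (\<forall>x\<in>A. \<forall>y\<in>A. f (addA x y) = addB (f x) (f y)) \<and>
     (\<forall>c. \<forall>x\<in>A. f (scA c x) = scB c (f x))"

definition Gr :: "('k::division_ring \<Rightarrow> 'v::ab_group_add \<Rightarrow> 'v) \<Rightarrow> 'v set set" where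
  "Gr sc = {X. subspace sc X \<and>
              (\<exists>f. lin_iso X (+) sc (quot X) (qadd X) (qscale sc X) f)}"

text \<open>X and Y are complementary: X \<oplus> Y = V.\<close>
definition distant :: "'v::ab_group_add set \<Rightarrow> 'v set \<Rightarrow> bool" where
  "distant X Y \<longleftrightarrow> X \<inter> Y = {0} \<and> ssum X Y = UNIV"

definition lspan :: "('k::division_ring \<Rightarrow> 'v::ab_group_add \<Rightarrow> 'v) \<Rightarrow> 'v set \<Rightarrow> 'v set" where
  "lspan sc S = \<Inter>{X. subspace sc X \<and> S \<subseteq> X}"

text \<open>dim((X+Y)/X) = 1: the quotient space (X+Y)/X is spanned by a single nonzero coset,
  i.e. there is v \<in> X+Y, v \<notin> X, with X+Y = span(X \<union> {v}).\<close>
definition quot_dim_one :: "('k::division_ring \<Rightarrow> 'v::ab_group_add \<Rightarrow> 'v) \<Rightarrow> 'v set \<Rightarrow> 'v set \<Rightarrow> bool" where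
  "quot_dim_one sc W X \<longleftrightarrow> (\<exists>v\<in>W. v \<notin> X \<and> W = lspan sc (insert v X))"

definition adjacent :: "('k::division_ring \<Rightarrow> 'v::ab_group_add \<Rightarrow> 'v) \<Rightarrow> 'v set \<Rightarrow> 'v set \<Rightarrow> bool" where
  "adjacent sc X Y \<longleftrightarrow> quot_dim_one sc (ssum X Y) X \<and> quot_dim_one sc (ssum X Y) Y"

end

theory Submission
  imports Defs
begin


lemma lin_iso_trans:
  assumes "lin_iso A addA scA B addB scB f" "lin_iso B addB scB C addC scC g"
  shows "lin_iso A addA scA C addC scC (g \<circ> f)"
proof -
  have b: "bij_betw f A B" "bij_betw g B C" using assms unfolding lin_iso_def by blast+
  have m: "\<And>x. x \<in> A \<Longrightarrow> f x \<in> B" using b(1) bij_betwE by blast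
  show ?thesis using assms m bij_betw_trans[OF b] unfolding lin_iso_def by simp
qed

lemma lin_iso_inv:
  assumes f: "lin_iso A addA scA B addB scB f"
    and clA: "\<forall>x\<in>A. \<forall>y\<in>A. addA x y \<in> A" "\<forall>c. \<forall>x\<in>A. scA c x \<in> A"
  shows "lin_iso B addB scB A addA scA (inv_into A f)"
proof -
  have bij: "bij_betw f A B" using f unfolding lin_iso_def by blast
  have ad: "\<forall>x\<in>A. \<forall>y\<in>A. f (addA x y) = addB (f x) (f y)" and sm: "\<forall>c. \<forall>x\<in>A. f (scA c x) = scB c (f x)"
    using f unfolding lin_iso_def by blast+
  have bi: "bij_betw (inv_into A f) B A" using bij by (rule bij_betw_inv_into)
  have iA: "\<And>b. b \<in> B \<Longrightarrow> inv_into A f b \<in> A" using bi bij_betwE by blast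
  have fi: "\<And>b. b \<in> B \<Longrightarrow> f (inv_into A f b) = b" using bij by (meson bij_betw_inv_into_right)
  have if': "\<And>a. a \<in> A \<Longrightarrow> inv_into A f (f a) = a" using bij by (meson bij_betw_inv_into_left)
  show ?thesis unfolding lin_iso_def
  proof (intro conjI bi ballI allI)
    fix x y assume "x \<in> B" "y \<in> B"
    hence "addB x y = f (addA (inv_into A f x) (inv_into A f y))" using ad iA fi by auto
    thus "inv_into A f (addB x y) = addA (inv_into A f x) (inv_into A f y)"
      using if' clA iA \<open>x\<in>B\<close> \<open>y\<in>B\<close> by auto
  next
    fix c x assume "x \<in> B"
    hence "scB c x = f (scA c (inv_into A f x))" using sm iA fi by auto
    thus "inv_into A f (scB c x) = scA c (inv_into A f x)"
      using if' clA iA \<open>x\<in>B\<close> by auto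
  qed
qed

lemma distant_sym: "distant X Y \<Longrightarrow> distant Y X"
proof -
  have "ssum X Y = ssum Y X" unfolding ssum_def by (auto, (metis add.commute)+)
  thus "distant X Y \<Longrightarrow> distant Y X" unfolding distant_def by auto
qed

locale lvs =
  fixes sc :: "'k::division_ring \<Rightarrow> 'v::ab_group_add \<Rightarrow> 'v"
  assumes lv: "left_vs sc"
begin

lemma sc_addr: "sc a (u + v) = sc a u + sc a v" using lv unfolding left_vs_def by blast
lemma sc_addl: "sc (a + b) v = sc a v + sc b v" using lv unfolding left_vs_def by blast
lemma sc_mult: "sc (a * b) v = sc a (sc b v)" using lv unfolding left_vs_def by blast
lemma sc_one[simp]: "sc 1 v = v" using lv unfolding left_vs_def by blast

lemma sc_zero_r[simp]: "sc a 0 = 0"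
proof -
  have "sc a (0 + 0) = sc a 0 + sc a 0" by (rule sc_addr)
  thus ?thesis by simp
qed

lemma sc_zero_l[simp]: "sc 0 v = 0"
proof -
  have "sc (0 + 0) v = sc 0 v + sc 0 v" by (rule sc_addl)
  thus ?thesis by simp
qed

lemma sc_neg_r: "sc a (- v) = - sc a v"
proof -
  have "sc a (v + - v) = sc a v + sc a (-v)" by (rule sc_addr)
  thus ?thesis by (simp add: eq_neg_iff_add_eq_0 add.commute)
qed

lemma sc_diff_r: "sc a (u - v) = sc a u - sc a v"
  using sc_addr[of a u "-v"] by (simp add: sc_neg_r)

lemma sc_neg_l: "sc (- a) v = - sc a v"
proof -
  have "sc (a + - a) v = sc a v + sc (-a) v" by (rule sc_addl)
  thus ?thesis by (simp add: eq_neg_iff_add_eq_0 add.commute)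
qed

lemma sc_diff_l: "sc (a - b) v = sc a v - sc b v"
  using sc_addl[of a "-b" v] by (simp add: sc_neg_l)

lemma sc_inv: "a \<noteq> 0 \<Longrightarrow> sc (inverse a) (sc a v) = v"
  by (simp flip: sc_mult)

lemma sc_eq0: "sc a v = 0 \<Longrightarrow> a = 0 \<or> v = 0"
  using sc_inv[of a v] by auto

lemma subspace_0: "subspace sc X \<Longrightarrow> 0 \<in> X" unfolding subspace_def by blast
lemma subspace_add: "subspace sc X \<Longrightarrow> x \<in> X \<Longrightarrow> y \<in> X \<Longrightarrow> x + y \<in> X" unfolding subspace_def by blast
lemma subspace_sc: "subspace sc X \<Longrightarrow> x \<in> X \<Longrightarrow> sc a x \<in> X" unfolding subspace_def by blast
lemma subspace_neg: "subspace sc X \<Longrightarrow> x \<in> X \<Longrightarrow> - x \<in> X"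
  using subspace_sc[of X x "-1"] by (simp add: sc_neg_l)
lemma subspace_diff: "subspace sc X \<Longrightarrow> x \<in> X \<Longrightarrow> y \<in> X \<Longrightarrow> x - y \<in> X"
  using subspace_add[of X x "-y"] subspace_neg[of X y] by simp
lemma subspace_cancel: "subspace sc X \<Longrightarrow> a \<noteq> 0 \<Longrightarrow> sc a x \<in> X \<Longrightarrow> x \<in> X"
  using subspace_sc[of X "sc a x" "inverse a"] by (simp add: sc_inv)
lemma subspace_UNIV: "subspace sc UNIV" unfolding subspace_def by simp
lemma subspace_Int: "subspace sc X \<Longrightarrow> subspace sc Y \<Longrightarrow> subspace sc (X \<inter> Y)"
  unfolding subspace_def by blast
lemma subspace_zero: "subspace sc {0}" unfolding subspace_def by simp

definition spl :: "'v set \<Rightarrow> 'v \<Rightarrow> 'v set" where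
  "spl U v = {u + sc a v | u a. u \<in> U}"

lemma spl_subspace: assumes "subspace sc U" shows "subspace sc (spl U v)"
  unfolding subspace_def spl_def
proof (intro conjI ballI allI)
  show "0 \<in> {u + sc a v |u a. u \<in> U}"
    using subspace_0[OF assms] by (auto intro!: exI[of _ 0])
next
  fix x y assume "x \<in> {u + sc a v |u a. u \<in> U}" "y \<in> {u + sc a v |u a. u \<in> U}"
  then obtain u1 a1 u2 a2 where "u1 \<in> U" "u2 \<in> U" "x = u1 + sc a1 v" "y = u2 + sc a2 v" by blast
  then show "x + y \<in> {u + sc a v |u a. u \<in> U}"
    by (intro CollectI exI[of _ "u1+u2"] exI[of _ "a1+a2"])
       (simp add: sc_addl subspace_add[OF assms] algebra_simps)
next
  fix c x assume "x \<in> {u + sc a v |u a. u \<in> U}"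
  then obtain u1 a1 where "u1 \<in> U" "x = u1 + sc a1 v" by blast
  then show "sc c x \<in> {u + sc a v |u a. u \<in> U}"
    by (intro CollectI exI[of _ "sc c u1"] exI[of _ "c*a1"])
       (simp add: sc_addr sc_mult subspace_sc[OF assms])
qed

lemma spl_base: "subspace sc U \<Longrightarrow> U \<subseteq> spl U v"
  unfolding spl_def by (force intro: exI[of _ 0])

lemma spl_sc: "subspace sc U \<Longrightarrow> sc a v \<in> spl U v"
  unfolding spl_def by (rule CollectI, rule exI[of _ 0], rule exI[of _ a]) (simp add: subspace_0)

lemma spl_vec: "subspace sc U \<Longrightarrow> v \<in> spl U v"
  using spl_sc[of U 1 v] by simp

lemma spl_least: "subspace sc W \<Longrightarrow> U \<subseteq> W \<Longrightarrow> v \<in> W \<Longrightarrow> spl U v \<subseteq> W"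
  unfolding spl_def using subspace_add subspace_sc by blast

lemma lspan_insert: assumes "subspace sc U" shows "lspan sc (insert v U) = spl U v"
proof
  show "lspan sc (insert v U) \<subseteq> spl U v"
    unfolding lspan_def using spl_subspace[OF assms] spl_base[OF assms] spl_vec[OF assms] by blast
  show "spl U v \<subseteq> lspan sc (insert v U)"
    unfolding lspan_def using spl_least by blast
qed

lemma spl_exch: assumes U: "subspace sc U" and x: "x \<in> spl U y" "x \<notin> U"
  shows "spl U y \<subseteq> spl U x"
proof -
  from x obtain u a where u: "u \<in> U" "x = u + sc a y" unfolding spl_def by blast
  have a: "a \<noteq> 0" using u x by auto
  have "y = sc (inverse a) (x - u)" using u a by (simp add: sc_inv)
  hence "y \<in> spl U x" using spl_subspace[OF U] spl_base[OF U] spl_vec[OF U] u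
    by (metis subset_iff subspace_diff subspace_sc)
  thus ?thesis using spl_least[OF spl_subspace[OF U] spl_base[OF U]] by blast
qed

lemma chain_union_subspace:
  assumes C: "C \<in> chains {Y. subspace sc Y \<and> P Y}" "C \<noteq> {}"
  shows "subspace sc (\<Union>C)"
proof -
  have sub: "\<And>Y. Y \<in> C \<Longrightarrow> subspace sc Y" using C unfolding chains_def by blast
  have ch: "\<And>A B. A \<in> C \<Longrightarrow> B \<in> C \<Longrightarrow> A \<subseteq> B \<or> B \<subseteq> A"
    using C unfolding chains_def chain_subset_def by blast
  show ?thesis unfolding subspace_def
  proof (intro conjI ballI allI)
    show "0 \<in> \<Union>C" using C(2) sub subspace_0 by blast
  next
    fix x y assume "x \<in> \<Union>C" "y \<in> \<Union>C"
    then obtain A B where "A \<in> C" "B \<in> C" "x \<in> A" "y \<in> B" by blast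
    then show "x + y \<in> \<Union>C" using ch[of A B] sub subspace_add by (metis UnionI subset_iff)
  next
    fix a x assume "x \<in> \<Union>C"
    then obtain A where "A \<in> C" "x \<in> A" by blast
    then show "sc a x \<in> \<Union>C" using sub subspace_sc by blast
  qed
qed

lemma ext_compl:
  assumes S: "subspace sc S" and T: "subspace sc T" and Y0: "subspace sc Y0" "Y0 \<subseteq> T" "Y0 \<inter> S = {0}"
  shows "\<exists>Y. subspace sc Y \<and> Y0 \<subseteq> Y \<and> Y \<subseteq> T \<and> Y \<inter> S = {0} \<and> (\<forall>t\<in>T. \<exists>s\<in>S. \<exists>y\<in>Y. t = s + y)"
proof -
  define A where "A = {Y. subspace sc Y \<and> (Y0 \<subseteq> Y \<and> Y \<subseteq> T \<and> Y \<inter> S = {0})}"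
  have "\<forall>C\<in>chains A. \<exists>U\<in>A. \<forall>X\<in>C. X \<subseteq> U"
  proof
    fix C assume C: "C \<in> chains A"
    show "\<exists>U\<in>A. \<forall>X\<in>C. X \<subseteq> U"
    proof (cases "C = {}")
      case True thus ?thesis using Y0 unfolding A_def by auto
    next
      case False
      have "subspace sc (\<Union>C)" using chain_union_subspace[OF C[unfolded A_def] False] .
      moreover have "\<Union>C \<in> A"
      proof -
        have "\<forall>Y\<in>C. Y0 \<subseteq> Y \<and> Y \<subseteq> T \<and> Y \<inter> S = {0}" using C unfolding A_def chains_def by blast
        thus ?thesis using False \<open>subspace sc (\<Union>C)\<close> subspace_0[OF S] unfolding A_def by blast
      qed
      ultimately show ?thesis by blast
    qed
  qed
  from Zorn_Lemma2[OF this] obtain M where M: "M \<in> A" and max: "\<forall>X\<in>A. M \<subseteq> X \<longrightarrow> X = M" by blast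
  have Ms: "subspace sc M" "Y0 \<subseteq> M" "M \<subseteq> T" "M \<inter> S = {0}" using M unfolding A_def by auto
  have "\<forall>t\<in>T. \<exists>s\<in>S. \<exists>y\<in>M. t = s + y"
  proof (rule ballI, rule ccontr)
    fix t assume t: "t \<in> T" and nt: "\<not> (\<exists>s\<in>S. \<exists>y\<in>M. t = s + y)"
    have "spl M t \<in> A"
    proof -
      have "spl M t \<inter> S \<subseteq> {0}"
      proof
        fix z assume z: "z \<in> spl M t \<inter> S"
        then obtain m a where m: "m \<in> M" "z = m + sc a t" unfolding spl_def by blast
        show "z \<in> {0}"
        proof (cases "a = 0")
          case True thus ?thesis using m z Ms by auto
        next
          case False
          have "sc a t = z - m" using m by (simp add: algebra_simps)
          hence "t = sc (inverse a) z - sc (inverse a) m" using False by (metis sc_inv sc_diff_r)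
          hence "t = sc (inverse a) z + (- sc (inverse a) m)" by simp
          moreover have "sc (inverse a) z \<in> S" using z subspace_sc[OF S] by blast
          moreover have "- sc (inverse a) m \<in> M" using m subspace_sc[OF Ms(1)] subspace_neg[OF Ms(1)] by blast
          ultimately show ?thesis using nt by blast
        qed
      qed
      moreover have "0 \<in> spl M t \<inter> S" using subspace_0[OF spl_subspace[OF Ms(1)]] subspace_0[OF S] by blast
      ultimately show ?thesis unfolding A_def
        using spl_subspace[OF Ms(1)] spl_base[OF Ms(1)] Ms spl_least[OF T Ms(3) t] by blast
    qed
    hence "spl M t = M" using max spl_base[OF Ms(1)] by blast
    hence "t \<in> M" using spl_vec[OF Ms(1)] by blast
    thus False using nt subspace_0[OF S] by force
  qed
  thus ?thesis using Ms by blast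
qed

lemma coset_eq: assumes X: "subspace sc X" shows "coset X a = coset X b \<longleftrightarrow> a - b \<in> X"
proof
  assume "coset X a = coset X b"
  moreover have "a \<in> coset X a" unfolding coset_def using subspace_0[OF X] by force
  ultimately obtain x where "x \<in> X" "a = b + x" unfolding coset_def by blast
  thus "a - b \<in> X" by simp
next
  assume h: "a - b \<in> X"
  show "coset X a = coset X b" unfolding coset_def
  proof (safe)
    fix x assume "x \<in> X"
    have "(a - b) + x \<in> X" using h \<open>x\<in>X\<close> subspace_add[OF X] by blast
    thus "\<exists>y. a + x = b + y \<and> y \<in> X"
      by (intro exI[of _ "(a - b) + x"]) (auto simp: algebra_simps)
  next
    fix x assume "x \<in> X"
    have "- (a - b) + x \<in> X" using h \<open>x\<in>X\<close> subspace_add[OF X] subspace_neg[OF X] by blast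
    thus "\<exists>y. b + x = a + y \<and> y \<in> X"
      by (intro exI[of _ "- (a - b) + x"]) (auto simp: algebra_simps)
  qed
qed

lemma qadd_coset: assumes X: "subspace sc X" shows "qadd X (coset X a) (coset X b) = coset X (a + b)"
proof
  show "qadd X (coset X a) (coset X b) \<subseteq> coset X (a + b)"
  proof
    fix z assume "z \<in> qadd X (coset X a) (coset X b)"
    then obtain x y where "x \<in> X" "y \<in> X" "z = (a + x) + (b + y)" unfolding qadd_def coset_def by blast
    moreover have "x + y \<in> X" using calculation subspace_add[OF X] by blast
    ultimately show "z \<in> coset X (a + b)" unfolding coset_def by (auto simp: algebra_simps intro!: exI[of _ "x+y"])
  qed
  show "coset X (a + b) \<subseteq> qadd X (coset X a) (coset X b)"
  proof
    fix z assume "z \<in> coset X (a + b)"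
    then obtain x where x: "x \<in> X" "z = a + b + x" unfolding coset_def by blast
    have "a + x \<in> coset X a" "b \<in> coset X b" using x subspace_0[OF X] unfolding coset_def by force+
    moreover have "z = (a + x) + b" using x by (simp add: algebra_simps)
    ultimately show "z \<in> qadd X (coset X a) (coset X b)" unfolding qadd_def by blast
  qed
qed

lemma qscale_coset: assumes X: "subspace sc X" shows "qscale sc X c (coset X a) = coset X (sc c a)"
proof
  show "qscale sc X c (coset X a) \<subseteq> coset X (sc c a)"
  proof
    fix z assume "z \<in> qscale sc X c (coset X a)"
    then obtain x y where "x \<in> X" "y \<in> X" "z = sc c (a + x) + y" unfolding qscale_def coset_def by blast
    moreover have "sc c x + y \<in> X" using calculation subspace_add[OF X] subspace_sc[OF X] by blast
    ultimately show "z \<in> coset X (sc c a)" unfolding coset_def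
      by (auto simp: algebra_simps sc_addr intro!: exI[of _ "sc c x + y"])
  qed
  show "coset X (sc c a) \<subseteq> qscale sc X c (coset X a)"
  proof
    fix z assume "z \<in> coset X (sc c a)"
    then obtain x where x: "x \<in> X" "z = sc c a + x" unfolding coset_def by blast
    have "a \<in> coset X a" using subspace_0[OF X] unfolding coset_def by force
    thus "z \<in> qscale sc X c (coset X a)" unfolding qscale_def using x by blast
  qed
qed

lemma compl_iso:
  assumes X: "subspace sc X" and Y: "subspace sc Y" and d: "distant X Y"
  shows "lin_iso Y (+) sc (quot X) (qadd X) (qscale sc X) (coset X)"
  unfolding lin_iso_def
proof (intro conjI ballI allI)
  show "bij_betw (coset X) Y (quot X)" unfolding bij_betw_def
  proof
    show "inj_on (coset X) Y"
    proof (rule inj_onI)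
      fix a b assume "a \<in> Y" "b \<in> Y" "coset X a = coset X b"
      hence "a - b \<in> X \<inter> Y" using coset_eq[OF X] subspace_diff[OF Y] by blast
      thus "a = b" using d unfolding distant_def by auto
    qed
    show "coset X ` Y = quot X" unfolding quot_def
    proof
      show "range (coset X) \<subseteq> coset X ` Y"
      proof
        fix z assume "z \<in> range (coset X)"
        then obtain v where v: "z = coset X v" by blast
        have "v \<in> ssum X Y" using d unfolding distant_def by blast
        then obtain x y where "x \<in> X" "y \<in> Y" "v = x + y" unfolding ssum_def by blast
        hence "coset X v = coset X y" using coset_eq[OF X] by simp
        thus "z \<in> coset X ` Y" using v \<open>y\<in>Y\<close> by blast
      qed
    qed blast
  qed
next
  fix a b assume "a \<in> Y" "b \<in> Y"
  show "coset X (a + b) = qadd X (coset X a) (coset X b)" using qadd_coset[OF X] by simp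
next
  fix c a assume "a \<in> Y"
  show "coset X (sc c a) = qscale sc X c (coset X a)" using qscale_coset[OF X] by simp
qed

lemma Gr_subspace: "R \<in> Gr sc \<Longrightarrow> subspace sc R" unfolding Gr_def by blast

lemma G_compl:
  assumes R: "R \<in> Gr sc" and X: "subspace sc X" and d: "distant R X"
  shows "X \<in> Gr sc"
proof -
  have Rs: "subspace sc R" using R by (rule Gr_subspace)
  obtain f where f: "lin_iso R (+) sc (quot R) (qadd R) (qscale sc R) f" using R unfolding Gr_def by blast
  have 1: "lin_iso X (+) sc (quot R) (qadd R) (qscale sc R) (coset R)" by (rule compl_iso[OF Rs X d])
  have 2: "lin_iso (quot R) (qadd R) (qscale sc R) R (+) sc (inv_into R f)"
    by (rule lin_iso_inv[OF f]) (use Rs subspace_add subspace_sc in blast)+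
  have 3: "lin_iso R (+) sc (quot X) (qadd X) (qscale sc X) (coset X)" by (rule compl_iso[OF X Rs distant_sym[OF d]])
  show ?thesis unfolding Gr_def using X lin_iso_trans[OF lin_iso_trans[OF 1 2] 3] by blast
qed

lemma Lcompl:
  assumes R: "subspace sc R" and H: "subspace sc H" and Y0: "subspace sc Y0" "Y0 \<subseteq> H" "Y0 \<inter> R = {0}"
    and RH: "\<forall>z. \<exists>r\<in>R. \<exists>h\<in>H. z = r + h"
  shows "\<exists>X. subspace sc X \<and> distant X R \<and> Y0 \<subseteq> X \<and> X \<subseteq> H"
proof -
  have "Y0 \<inter> (R \<inter> H) = {0}" using Y0 subspace_0[OF R] subspace_0[OF H] by blast
  from ext_compl[OF subspace_Int[OF R H] H Y0(1,2) this] obtain Y where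
    Y: "subspace sc Y" "Y0 \<subseteq> Y" "Y \<subseteq> H" "Y \<inter> (R \<inter> H) = {0}" "\<forall>t\<in>H. \<exists>s\<in>R \<inter> H. \<exists>y\<in>Y. t = s + y" by blast
  have "Y \<inter> R = {0}" using Y(3,4) by blast
  moreover have "ssum Y R = UNIV"
  proof -
    { fix z
      obtain r h where rh: "r \<in> R" "h \<in> H" "z = r + h" using RH by blast
      then obtain s y where sy: "s \<in> R" "y \<in> Y" "h = s + y" using Y(5) by blast
      have "z = y + (r + s)" using rh sy by (simp add: algebra_simps)
      moreover have "r + s \<in> R" using rh sy subspace_add[OF R] by blast
      ultimately have "z \<in> ssum Y R" unfolding ssum_def using sy by blast }
    thus ?thesis by blast
  qed
  ultimately show ?thesis using Y unfolding distant_def by blast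
qed

lemma hyperplane:
  assumes U: "subspace sc U" and c: "c \<notin> U"
  shows "\<exists>H. subspace sc H \<and> U \<subseteq> H \<and> c \<notin> H \<and> (\<forall>z. \<exists>h\<in>H. \<exists>a. z = h + sc a c)"
proof -
  have L: "subspace sc (spl {0} c)" by (rule spl_subspace[OF subspace_zero])
  have "U \<inter> spl {0} c = {0}"
  proof -
    { fix z assume z: "z \<in> U" "z \<in> spl {0} c"
      then obtain a where a: "z = sc a c" unfolding spl_def by auto
      have "z = 0"
      proof (cases "a = 0")
        case True thus ?thesis using a by simp
      next
        case False thus ?thesis using subspace_cancel[OF U False] a z c by blast
      qed }
    thus ?thesis using subspace_0[OF U] subspace_0[OF L] by blast
  qed
  from ext_compl[OF L subspace_UNIV U _ this] obtain Y where
    Y: "subspace sc Y" "U \<subseteq> Y" "Y \<inter> spl {0} c = {0}" "\<forall>t. \<exists>s\<in>spl {0} c. \<exists>y\<in>Y. t = s + y" by auto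
  have "c \<noteq> 0" using c subspace_0[OF U] by blast
  hence "c \<notin> Y" using Y(3) spl_vec[OF subspace_zero, of c] by blast
  moreover have "\<forall>z. \<exists>h\<in>Y. \<exists>a. z = h + sc a c"
  proof
    fix z obtain s y where "s \<in> spl {0} c" "y \<in> Y" "z = s + y" using Y(4) by blast
    then obtain a where "z = y + sc a c" unfolding spl_def by (auto simp: add.commute)
    thus "\<exists>h\<in>Y. \<exists>a. z = h + sc a c" using \<open>y\<in>Y\<close> by blast
  qed
  ultimately show ?thesis using Y by blast
qed

lemma compl_exists: assumes R: "subspace sc R" shows "\<exists>X. subspace sc X \<and> distant X R"
proof -
  have "{0} \<inter> R = {0}" using subspace_0[OF R] by blast
  moreover have "\<forall>z. \<exists>r\<in>R. \<exists>h\<in>UNIV. z = r + h" using subspace_0[OF R] by force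
  ultimately show ?thesis using Lcompl[OF R subspace_UNIV subspace_zero] by blast
qed

lemma E_lemma: assumes "subspace sc R" "subspace sc P" "subspace sc X"
  "distant X R" "distant X P" "P \<subseteq> R" shows "R \<subseteq> P"
proof
  fix c assume c: "c \<in> R"
  have "c \<in> ssum X P" using assms(5) unfolding distant_def by blast
  then obtain x p where xp: "x \<in> X" "p \<in> P" "c = x + p" unfolding ssum_def by blast
  have "x = c - p" using xp by simp
  hence "x \<in> R" using c xp assms(6) subspace_diff[OF assms(1)] by blast
  hence "x = 0" using xp assms(4) unfolding distant_def by blast
  thus "c \<in> P" using xp by simp
qed

definition Cond :: "'v set \<Rightarrow> 'v set \<Rightarrow> 'v set \<Rightarrow> bool" where
  "Cond R P Q \<longleftrightarrow> (\<forall>X\<in>Gr sc. distant X R \<longrightarrow> distant X P \<or> distant X Q)"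

lemma B1:
  assumes R: "R \<in> Gr sc" and P: "subspace sc P" and Q: "subspace sc Q" and C: "Cond R P Q"
    and c: "c \<in> R" and v: "v \<in> P" "v \<notin> R"
  shows "c \<in> spl Q v"
proof (rule ccontr)
  assume nc: "c \<notin> spl Q v"
  have Rs: "subspace sc R" using R by (rule Gr_subspace)
  obtain H where H: "subspace sc H" "spl Q v \<subseteq> H" "c \<notin> H" "\<forall>z. \<exists>h\<in>H. \<exists>a. z = h + sc a c"
    using hyperplane[OF spl_subspace[OF Q] nc] by blast
  have RH: "\<forall>z. \<exists>r\<in>R. \<exists>h\<in>H. z = r + h"
  proof
    fix z obtain h a where "h \<in> H" "z = h + sc a c" using H(4) by blast
    moreover have "sc a c \<in> R" using subspace_sc[OF Rs c] .
    ultimately show "\<exists>r\<in>R. \<exists>h\<in>H. z = r + h" by (intro bexI[of _ "sc a c"] bexI[of _ h]) (auto simp: add.commute)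
  qed
  have Y0: "subspace sc (spl {0} v)" by (rule spl_subspace[OF subspace_zero])
  have "spl {0} v \<subseteq> spl Q v" using spl_least[OF spl_subspace[OF Q] _ spl_vec[OF Q]] subspace_0[OF spl_subspace[OF Q]] by blast
  hence Y0H: "spl {0} v \<subseteq> H" using H(2) by blast
  have Y0R: "spl {0} v \<inter> R = {0}"
  proof -
    { fix z assume z: "z \<in> spl {0} v" "z \<in> R"
      then obtain a where a: "z = sc a v" unfolding spl_def by auto
      have "z = 0"
      proof (cases "a = 0")
        case True thus ?thesis using a by simp
      next
        case False thus ?thesis using subspace_cancel[OF Rs False] a z v by blast
      qed }
    thus ?thesis using subspace_0[OF Rs] subspace_0[OF Y0] by blast
  qed
  obtain X where X: "subspace sc X" "distant X R" "spl {0} v \<subseteq> X" "X \<subseteq> H"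
    using Lcompl[OF Rs H(1) Y0 Y0H Y0R RH] by blast
  have XG: "X \<in> Gr sc" using G_compl[OF R X(1) distant_sym[OF X(2)]] .
  have "distant X P \<or> distant X Q" using C XG X(2) unfolding Cond_def by blast
  moreover have "\<not> distant X P"
  proof
    assume "distant X P"
    moreover have "v \<in> X" using X(3) spl_vec[OF subspace_zero] by blast
    moreover have "v \<noteq> 0" using v subspace_0[OF Rs] by blast
    ultimately show False using v unfolding distant_def by blast
  qed
  moreover have "\<not> distant X Q"
  proof
    assume "distant X Q"
    hence "c \<in> ssum X Q" unfolding distant_def by blast
    then obtain x q where "x \<in> X" "q \<in> Q" "c = x + q" unfolding ssum_def by blast
    moreover have "q \<in> H" using \<open>q\<in>Q\<close> H(2) spl_base[OF Q] by blast
    moreover have "x \<in> H" using \<open>x\<in>X\<close> X(4) by blast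
    ultimately have "c \<in> H" using subspace_add[OF H(1)] by simp
    thus False using H(3) by blast
  qed
  ultimately show False by blast
qed

lemma B3:
  assumes R: "R \<in> Gr sc" and C: "Cond R P Q"
    and v: "v \<in> P" "v \<noteq> 0" and w: "w \<in> Q" "w \<noteq> 0"
    and ind: "\<forall>s t. sc s v + sc t w \<in> R \<longrightarrow> sc s v + sc t w = 0"
  shows False
proof -
  have Rs: "subspace sc R" using R by (rule Gr_subspace)
  define Y0 where "Y0 = spl (spl {0} v) w"
  have Y0s: "subspace sc Y0" unfolding Y0_def by (rule spl_subspace[OF spl_subspace[OF subspace_zero]])
  have vY: "v \<in> Y0" unfolding Y0_def using spl_base[OF spl_subspace[OF subspace_zero]] spl_vec[OF subspace_zero] by blast
  have wY: "w \<in> Y0" unfolding Y0_def using spl_vec[OF spl_subspace[OF subspace_zero]] by blast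
  have "Y0 \<inter> R = {0}"
  proof -
    { fix z assume z: "z \<in> Y0" "z \<in> R"
      then obtain s t where "z = sc s v + sc t w" unfolding Y0_def spl_def by auto
      hence "z = 0" using ind z by blast }
    thus ?thesis using subspace_0[OF Rs] subspace_0[OF Y0s] by blast
  qed
  moreover have "\<forall>z. \<exists>r\<in>R. \<exists>h\<in>UNIV. z = r + h" using subspace_0[OF Rs] by force
  ultimately obtain X where X: "subspace sc X" "distant X R" "Y0 \<subseteq> X"
    using Lcompl[OF Rs subspace_UNIV Y0s] by blast
  have XG: "X \<in> Gr sc" using G_compl[OF R X(1) distant_sym[OF X(2)]] .
  have "distant X P \<or> distant X Q" using C XG X(2) unfolding Cond_def by blast
  thus False using X(3) vY wY v w unfolding distant_def by blast
qed

lemma Cond_sym: "Cond R P Q \<Longrightarrow> Cond R Q P" unfolding Cond_def by blast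

lemma F1: assumes R: "R \<in> Gr sc" and C: "Cond R P Q" shows "P \<inter> Q \<subseteq> R"
proof
  fix m assume m: "m \<in> P \<inter> Q"
  have Rs: "subspace sc R" using R by (rule Gr_subspace)
  show "m \<in> R"
  proof (rule ccontr)
    assume nm: "m \<notin> R"
    have m0: "m \<noteq> 0" using nm subspace_0[OF Rs] by blast
    have "\<forall>s t. sc s m + sc t m \<in> R \<longrightarrow> sc s m + sc t m = 0"
    proof (intro allI impI)
      fix s t assume "sc s m + sc t m \<in> R"
      hence "sc (s + t) m \<in> R" by (simp add: sc_addl)
      hence "s + t = 0" using subspace_cancel[OF Rs] nm by blast
      thus "sc s m + sc t m = 0" by (simp flip: sc_addl)
    qed
    thus False using B3[OF R C _ m0 _ m0] m by blast
  qed
qed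

lemma E2: assumes R: "R \<in> Gr sc" and P: "subspace sc P" and Q: "subspace sc Q" and C: "Cond R P Q"
  and "P \<subseteq> R" "Q \<subseteq> R" shows "R = P \<or> R = Q"
proof -
  have Rs: "subspace sc R" using R by (rule Gr_subspace)
  obtain X where X: "subspace sc X" "distant X R" using compl_exists[OF Rs] by blast
  have XG: "X \<in> Gr sc" using G_compl[OF R X(1) distant_sym[OF X(2)]] .
  have "distant X P \<or> distant X Q" using C XG X(2) unfolding Cond_def by blast
  thus ?thesis using E_lemma[OF Rs P X(1) X(2)] E_lemma[OF Rs Q X(1) X(2)] assms(5,6) by blast
qed

lemma Lq: assumes R: "R \<in> Gr sc" and P: "subspace sc P" and Q: "subspace sc Q" and C: "Cond R P Q"
  and QR: "Q \<subseteq> R" "R \<noteq> Q" and v: "v \<in> P" "v \<notin> R" shows False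
proof -
  have Rs: "subspace sc R" using R by (rule Gr_subspace)
  obtain c where c: "c \<in> R" "c \<notin> Q" using QR by blast
  have "c \<in> spl Q v" by (rule B1[OF R P Q C c(1) v])
  then obtain q a where qa: "q \<in> Q" "c = q + sc a v" unfolding spl_def by blast
  have a: "a \<noteq> 0" using qa c by auto
  have "sc a v = c - q" using qa by simp
  moreover have "c - q \<in> R" using c(1) qa(1) QR(1) subspace_diff[OF Rs] by blast
  ultimately have "sc a v \<in> R" by simp
  thus False using subspace_cancel[OF Rs a] v by blast
qed

lemma RsubP: assumes R: "R \<in> Gr sc" and P: "subspace sc P" and Q: "subspace sc Q" and C: "Cond R P Q"
  and RP: "R \<subseteq> P" "R \<noteq> P" and q: "q \<in> Q" "q \<notin> P" shows False
proof -
  have Rs: "subspace sc R" using R by (rule Gr_subspace)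
  obtain v where v: "v \<in> P" "v \<notin> R" using RP by blast
  have v0: "v \<noteq> 0" using v subspace_0[OF Rs] by blast
  have q0: "q \<noteq> 0" using q subspace_0[OF P] by blast
  have "\<forall>s t. sc s v + sc t q \<in> R \<longrightarrow> sc s v + sc t q = 0"
  proof (intro allI impI)
    fix s t assume h: "sc s v + sc t q \<in> R"
    have t: "t = 0"
    proof (rule ccontr)
      assume t: "t \<noteq> 0"
      have "sc t q = (sc s v + sc t q) - sc s v" by simp
      hence "sc t q \<in> P" using h RP subspace_diff[OF P] subspace_sc[OF P v(1)] by (metis subsetD)
      thus False using subspace_cancel[OF P t] q by blast
    qed
    hence "sc s v \<in> R" using h by simp
    hence "s = 0" using subspace_cancel[OF Rs] v by blast
    thus "sc s v + sc t q = 0" using t by simp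
  qed
  thus False using B3[OF R C v(1) v0 q(1) q0] by blast
qed

lemma Dim1:
  assumes R: "R \<in> Gr sc" and P: "subspace sc P" and Q: "subspace sc Q" and C: "Cond R P Q"
    and RP: "R \<noteq> P" and RQ: "R \<noteq> Q"
  shows "\<exists>q\<in>Q. q \<notin> P \<and> Q \<subseteq> spl P q"
proof -
  have Rs: "subspace sc R" using R by (rule Gr_subspace)
  have C': "Cond R Q P" using C by (rule Cond_sym)
  have QP: "\<not> Q \<subseteq> P"
  proof
    assume QP: "Q \<subseteq> P"
    hence QR: "Q \<subseteq> R" using F1[OF R C] by blast
    show False
    proof (cases "P \<subseteq> R")
      case True thus False using E2[OF R P Q C True QR] RP RQ by blast
    next
      case False then obtain v where "v \<in> P" "v \<notin> R" by blast
      thus False using Lq[OF R P Q C QR RQ] by blast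
    qed
  qed
  then obtain q where q: "q \<in> Q" "q \<notin> P" by blast
  have RnP: "\<not> R \<subseteq> P" using RsubP[OF R P Q C _ RP q] by blast
  then obtain c where c: "c \<in> R" "c \<notin> P" by blast
  have QnR: "\<not> Q \<subseteq> R"
  proof
    assume QR: "Q \<subseteq> R"
    show False
    proof (cases "P \<subseteq> R")
      case True thus False using E2[OF R P Q C True QR] RP RQ by blast
    next
      case False then obtain v where "v \<in> P" "v \<notin> R" by blast
      thus False using Lq[OF R P Q C QR RQ] by blast
    qed
  qed
  then obtain w where w: "w \<in> Q" "w \<notin> R" by blast
  have key: "\<And>y. y \<in> Q \<Longrightarrow> y \<notin> R \<Longrightarrow> y \<in> spl P c"
  proof -
    fix y assume y: "y \<in> Q" "y \<notin> R"
    have "c \<in> spl P y" by (rule B1[OF R Q P C' c(1) y])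
    hence "spl P y \<subseteq> spl P c" using spl_exch[OF P _ c(2)] by blast
    thus "y \<in> spl P c" using spl_vec[OF P] by blast
  qed
  have "Q \<subseteq> spl P c"
  proof
    fix y assume y: "y \<in> Q"
    show "y \<in> spl P c"
    proof (cases "y \<in> R")
      case False thus ?thesis using key y by blast
    next
      case True
      have "w + y \<in> Q" using w y subspace_add[OF Q] by blast
      moreover have "w + y \<notin> R"
      proof
        assume "w + y \<in> R"
        hence "(w + y) - y \<in> R" using True subspace_diff[OF Rs] by blast
        thus False using w by simp
      qed
      ultimately have "w + y \<in> spl P c" using key by blast
      moreover have "w \<in> spl P c" using key w by blast
      ultimately have "(w + y) - w \<in> spl P c" using subspace_diff[OF spl_subspace[OF P]] by blast
      thus ?thesis by simp
    qed
  qed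
  moreover have "spl P c \<subseteq> spl P q" using spl_exch[OF P _ q(2)] q(1) calculation by blast
  ultimately show ?thesis using q by blast
qed

lemma Dist:
  assumes X: "subspace sc X" and Y: "subspace sc Y" and Rs: "subspace sc R" and d: "distant X R"
    and RN: "R \<subseteq> N" and YN: "Y \<subseteq> N" and N1: "N \<subseteq> spl R x" and N2: "N \<subseteq> spl Y x"
    and x: "x \<in> X" "x \<notin> Y"
  shows "distant X Y"
  unfolding distant_def
proof
  show "X \<inter> Y = {0}"
  proof
    show "X \<inter> Y \<subseteq> {0}"
    proof
      fix y assume y: "y \<in> X \<inter> Y"
      hence "y \<in> spl R x" using YN N1 by blast
      then obtain r c where rc: "r \<in> R" "y = r + sc c x" unfolding spl_def by blast
      have "r = y - sc c x" using rc by simp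
      hence "r \<in> X" using y x subspace_diff[OF X] subspace_sc[OF X] by blast
      hence "r = 0" using rc d unfolding distant_def by blast
      hence y': "y = sc c x" using rc by simp
      show "y \<in> {0}"
      proof (cases "c = 0")
        case True thus ?thesis using y' by simp
      next
        case False thus ?thesis using subspace_cancel[OF Y False] y y' x by blast
      qed
    qed
    show "{0} \<subseteq> X \<inter> Y" using subspace_0[OF X] subspace_0[OF Y] by blast
  qed
  show "ssum X Y = UNIV"
  proof -
    { fix z
      have "z \<in> ssum X R" using d unfolding distant_def by blast
      then obtain x' r where xr: "x' \<in> X" "r \<in> R" "z = x' + r" unfolding ssum_def by blast
      hence "r \<in> spl Y x" using RN N2 by blast
      then obtain y c where yc: "y \<in> Y" "r = y + sc c x" unfolding spl_def by blast
      have "z = (x' + sc c x) + y" using xr yc by (simp add: algebra_simps)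
      moreover have "x' + sc c x \<in> X" using xr x subspace_add[OF X] subspace_sc[OF X] by blast
      ultimately have "z \<in> ssum X Y" unfolding ssum_def using yc by blast }
    thus ?thesis by blast
  qed
qed

lemma ssum_left: "subspace sc Q \<Longrightarrow> P \<subseteq> ssum P Q"
  unfolding ssum_def using subspace_0 by force
lemma ssum_right: "subspace sc P \<Longrightarrow> Q \<subseteq> ssum P Q"
  unfolding ssum_def using subspace_0 by force

lemma adj_half:
  assumes P: "subspace sc P" and Q: "subspace sc Q" and a: "quot_dim_one sc (ssum P Q) P"
  shows "\<exists>q\<in>Q. q \<notin> P \<and> ssum P Q = spl P q"
proof -
  from a obtain v where v: "v \<in> ssum P Q" "v \<notin> P" "ssum P Q = spl P v"
    unfolding quot_dim_one_def using lspan_insert[OF P] by auto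
  then obtain p1 q1 where pq: "p1 \<in> P" "q1 \<in> Q" "v = p1 + q1" unfolding ssum_def by blast
  have q1P: "q1 \<notin> P"
  proof
    assume "q1 \<in> P" thus False using pq v subspace_add[OF P] by blast
  qed
  have q1N: "q1 \<in> ssum P Q" using ssum_right[OF P] pq by blast
  have "spl P v \<subseteq> spl P q1" using spl_exch[OF P _ q1P] q1N v by blast
  moreover have "spl P q1 \<subseteq> spl P v" using spl_least[OF spl_subspace[OF P] spl_base[OF P]] q1N v by blast
  ultimately show ?thesis using pq q1P v by blast
qed

lemma AtoB:
  assumes PG: "P \<in> Gr sc" and QG: "Q \<in> Gr sc" and adj: "adjacent sc P Q"
  shows "\<exists>R\<in>Gr sc. R \<noteq> P \<and> R \<noteq> Q \<and> (\<forall>X\<in>Gr sc. distant X R \<longrightarrow> distant X P \<or> distant X Q)"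
proof -
  have P: "subspace sc P" using PG by (rule Gr_subspace)
  have Q: "subspace sc Q" using QG by (rule Gr_subspace)
  define N where "N = ssum P Q"
  have NQP: "ssum Q P = N" unfolding N_def ssum_def by (auto, (metis add.commute)+)
  obtain q where q: "q \<in> Q" "q \<notin> P" "N = spl P q"
    using adj_half[OF P Q] adj unfolding adjacent_def N_def by blast
  obtain p where p: "p \<in> P" "p \<notin> Q" "N = spl Q p"
    using adj_half[OF Q P] adj NQP unfolding adjacent_def N_def by metis
  have Ns: "subspace sc N" using q(3) spl_subspace[OF P] by simp
  have PN: "P \<subseteq> N" and QN: "Q \<subseteq> N" unfolding N_def using ssum_left[OF Q] ssum_right[OF P] by auto
  define M where "M = P \<inter> Q"
  have Ms: "subspace sc M" unfolding M_def using subspace_Int[OF P Q] .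
  define R where "R = spl M (p + q)"
  have Rs: "subspace sc R" unfolding R_def by (rule spl_subspace[OF Ms])
  have MR: "M \<subseteq> R" unfolding R_def by (rule spl_base[OF Ms])
  have pqR: "p + q \<in> R" unfolding R_def by (rule spl_vec[OF Ms])
  have pqN: "p + q \<in> N" using p q PN QN subspace_add[OF Ns] by blast
  have RN: "R \<subseteq> N" unfolding R_def using spl_least[OF Ns _ pqN] PN unfolding M_def by blast
  have NR: "N \<subseteq> spl R p"
  proof
    fix n assume "n \<in> N"
    then obtain x b where xb: "x \<in> P" "n = x + sc b q" using q(3) unfolding spl_def by blast
    hence "x \<in> spl Q p" using PN p(3) by blast
    then obtain y a where ya: "y \<in> Q" "x = y + sc a p" unfolding spl_def by blast
    have "y = x - sc a p" using ya by simp
    hence "y \<in> P" using xb p subspace_diff[OF P] subspace_sc[OF P] by blast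
    hence yM: "y \<in> M" unfolding M_def using ya by blast
    have "n = (y + sc b (p + q)) + sc (a - b) p"
      using xb ya by (simp add: sc_addr sc_diff_l algebra_simps)
    moreover have "y + sc b (p + q) \<in> R" unfolding R_def spl_def using yM by blast
    ultimately show "n \<in> spl R p" unfolding spl_def by blast
  qed
  have pnR: "p \<notin> R"
  proof
    assume "p \<in> R"
    then obtain m a where ma: "m \<in> M" "p = m + sc a (p + q)" unfolding R_def spl_def by blast
    show False
    proof (cases "a = 0")
      case True thus False using ma p unfolding M_def by auto
    next
      case False
      have "sc a q = p - m - sc a p" using ma by (simp add: sc_addr algebra_simps)
      moreover have "p - m - sc a p \<in> P" using ma p subspace_diff[OF P] subspace_sc[OF P] unfolding M_def by blast
      ultimately show False using subspace_cancel[OF P False] q by auto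
    qed
  qed
  have RP: "R \<noteq> P"
  proof
    assume "R = P"
    hence "p + q - p \<in> P" using pqR p subspace_diff[OF P] by blast
    thus False using q by simp
  qed
  have RQ: "R \<noteq> Q"
  proof
    assume "R = Q"
    hence "p + q - q \<in> Q" using pqR q subspace_diff[OF Q] by blast
    thus False using p by simp
  qed
  have key: "\<And>X. subspace sc X \<Longrightarrow> distant X R \<Longrightarrow> distant X P \<or> distant X Q"
  proof -
    fix X assume X: "subspace sc X" and d: "distant X R"
    have "p \<in> ssum X R" using d unfolding distant_def by blast
    then obtain x r where xr: "x \<in> X" "r \<in> R" "p = x + r" unfolding ssum_def by blast
    have xe: "x = p - r" using xr by simp
    have xN: "x \<in> N" using xe xr PN RN p subspace_diff[OF Ns] by blast
    have xnR: "x \<notin> R"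
    proof
      assume "x \<in> R" thus False using xr pnR subspace_add[OF Rs] by blast
    qed
    have "x \<in> spl R p" using xe xr subspace_neg[OF Rs]
      unfolding spl_def by (intro CollectI exI[of _ "- r"] exI[of _ 1]) simp
    hence N1: "N \<subseteq> spl R x" using NR spl_exch[OF Rs _ xnR] by blast
    have "x \<notin> P \<or> x \<notin> Q" using xnR MR unfolding M_def by blast
    thus "distant X P \<or> distant X Q"
    proof
      assume xP: "x \<notin> P"
      have "N \<subseteq> spl P x" using q(3) xN spl_exch[OF P _ xP] by blast
      thus ?thesis using Dist[OF X P Rs d RN PN N1 _ xr(1) xP] by blast
    next
      assume xQ: "x \<notin> Q"
      have "N \<subseteq> spl Q x" using p(3) xN spl_exch[OF Q _ xQ] by blast
      thus ?thesis using Dist[OF X Q Rs d RN QN N1 _ xr(1) xQ] by blast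
    qed
  qed
  have RG: "R \<in> Gr sc"
  proof -
    obtain X where X: "subspace sc X" "distant X R" using compl_exists[OF Rs] by blast
    have "distant X P \<or> distant X Q" using key X by blast
    hence "X \<in> Gr sc" using G_compl[OF PG X(1)] G_compl[OF QG X(1)] distant_sym by blast
    thus ?thesis using G_compl[OF _ Rs X(2)] by blast
  qed
  show ?thesis using RG RP RQ key Gr_subspace by blast
qed

lemma half_back:
  assumes P: "subspace sc P" and Q: "subspace sc Q" and q: "q \<in> Q" "q \<notin> P" "Q \<subseteq> spl P q"
  shows "quot_dim_one sc (ssum P Q) P"
proof -
  have "ssum P Q = spl P q"
  proof
    show "ssum P Q \<subseteq> spl P q"
    proof
      fix z assume "z \<in> ssum P Q"
      then obtain x y where "x \<in> P" "y \<in> Q" "z = x + y" unfolding ssum_def by blast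
      thus "z \<in> spl P q" using q(3) spl_base[OF P] subspace_add[OF spl_subspace[OF P]] by blast
    qed
    show "spl P q \<subseteq> ssum P Q"
    proof
      fix z assume "z \<in> spl P q"
      then obtain u a where "u \<in> P" "z = u + sc a q" unfolding spl_def by blast
      thus "z \<in> ssum P Q" unfolding ssum_def using subspace_sc[OF Q q(1)] by blast
    qed
  qed
  thus ?thesis unfolding quot_dim_one_def using q ssum_right[OF P] lspan_insert[OF P] by auto
qed

end

lemma ssum_comm: "ssum P Q = ssum Q P" unfolding ssum_def by (auto, (metis add.commute)+)

theorem theorem3p1:
  fixes sc :: "'k::division_ring \<Rightarrow> 'v::ab_group_add \<Rightarrow> 'v"
    and P Q :: "'v set"
  assumes "left_vs sc"
    and "Gr sc \<noteq> {}"
    and "P \<in> Gr sc" and "Q \<in> Gr sc"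
  shows "adjacent sc P Q \<longleftrightarrow>
         (\<exists>R\<in>Gr sc. R \<noteq> P \<and> R \<noteq> Q \<and>
            (\<forall>X\<in>Gr sc. distant X R \<longrightarrow> distant X P \<or> distant X Q))"
proof -
  interpret lvs sc by unfold_locales (rule assms(1))
  have P: "subspace sc P" using assms(3) by (rule Gr_subspace)
  have Q: "subspace sc Q" using assms(4) by (rule Gr_subspace)
  show ?thesis
  proof
    assume "adjacent sc P Q" thus "\<exists>R\<in>Gr sc. R \<noteq> P \<and> R \<noteq> Q \<and>
            (\<forall>X\<in>Gr sc. distant X R \<longrightarrow> distant X P \<or> distant X Q)"
      using AtoB[OF assms(3,4)] by blast
  next
    assume "\<exists>R\<in>Gr sc. R \<noteq> P \<and> R \<noteq> Q \<and>
            (\<forall>X\<in>Gr sc. distant X R \<longrightarrow> distant X P \<or> distant X Q)"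
    then obtain R where R: "R \<in> Gr sc" "R \<noteq> P" "R \<noteq> Q" and C: "Cond R P Q" unfolding Cond_def by blast
    obtain q where q: "q \<in> Q" "q \<notin> P" "Q \<subseteq> spl P q" using Dim1[OF R(1) P Q C R(2,3)] by blast
    obtain p where p: "p \<in> P" "p \<notin> Q" "P \<subseteq> spl Q p" using Dim1[OF R(1) Q P Cond_sym[OF C] R(3,2)] by blast
    show "adjacent sc P Q" unfolding adjacent_def
      using half_back[OF P Q q] half_back[OF Q P p] ssum_comm[of P Q] by simp
  qed
qed

end
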